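(* Let $G$ and $H$ be connected graphs of order at least two such that neither $G$ nor $H$ is a complete graph, and suppose $\textnormal{diam}(G\diamond H)=3$. (a) If $\{g,g'\}$ is a $\gamma_G$-pair and $\{h,h'\}$ is a $\gamma_H$-pair, then $O_{\rm SR}(G\diamond H)=\mathcal{B}$. (b) If $G$ has at least two distinct universal vertices and $\textnormal{diam}(H)\ge 3$, then $O_{\rm SR}(G\diamond H)=\mathcal{B}$. (c) Suppose $G$ has no $\gamma_G$-pair and no universal vertex, but $G$ has a pair of distinct adjacent twins and $H$ has a $\gamma_H$-pair. Then $O_{\rm SR}(G\diamond H)=\mathcal{B}$. (d) Suppose $G$ has no $\gamma_G$-pair and no universal vertex, and $H$ has a $\gamma_H$-pair and at least two distinct vertices of $H$ belong to no $\gamma_H$-pair. Then $O_{\rm SR}(G\diamond H)=\mathcal{B}$. (e) Suppose $G$ has no $\gamma_G$-pair and no universal vertex, and $H$ has distinct adjacent twins $h_1,h_2$ such that both $\{h_1,h\}$ and $\{h_2,h\}$ are $\gamma_H$-pairs for some $h\in V(H)\setminus\{h_1,h_2\}$. Then $O_{\rm SR}(G\diamond H)=\mathcal{B}$.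
   Context: All graphs are finite, simple and undirected; $\overline{X}$ denotes the complement of $X$; $\textnormal{diam}$ denotes diameter; $N_X[x]=N_X(x)\cup\{x\}$. A universal vertex of $X$ is a vertex adjacent to all other vertices. Distinct vertices $u,w$ are adjacent twins if $N[u]=N[w]$. A set $D$ is a dominating set of $X$ if $\bigcup_{x\in D}N[x]=V(X)$. A pair $\{u,w\}$ is a $\gamma_X$-pair if $\{u,w\}$ is a minimum dominating set of $X$ with $N_X[u]\cap N_X[w]=\emptyset$ and $N_X[u]\cup N_X[w]=V(X)$. The modular product $G\diamond H$ has vertex set $V(G)\times V(H)$, and $(g,h)$, $(g',h')$ are adjacent iff one of the following holds: ($g=g'$ and $hh'\in E(H)$), or ($h=h'$ and $gg'\in E(G)$), or ($gg'\in E(G)$ and $hh'\in E(H)$), or ($gg'\in E(\overline{G})$ and $hh'\in E(\overline{H})$). A set $S\subseteq V(X)$ is a strong resolving set of a connected graph $X$ if for all distinct $x,y\in V(X)$ there exists $z\in S$ such that $x$ lies on a $y$–$z$ geodesic or $y$ lies on an $x$–$z$ geodesic. The Maker–Breaker strong resolving game on $X$: Maker and Breaker alternately select a not-yet-chosen vertex of $X$; Maker wins if the vertices he selects contain a strong resolving set of $X$, Breaker wins otherwise. In the M-game Maker moves first, in the B-game Breaker moves first. $O_{\rm SR}(X)=\mathcal{M}$ if Maker has a winning strategy in both games, $\mathcal{B}$ if Breaker has a winning strategy in both, and $\mathcal{N}$ if the first player has a winning strategy in each. *)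

theory Defs
  imports Main
begin

definition graph :: "'a set \<Rightarrow> ('a \<Rightarrow> 'a \<Rightarrow> bool) \<Rightarrow> bool" where
  "graph V E \<longleftrightarrow> finite V \<and> (\<forall>x y. E x y \<longrightarrow> x \<in> V \<and> y \<in> V)
     \<and> (\<forall>x y. E x y \<longrightarrow> E y x) \<and> (\<forall>x. \<not> E x x)"

definition cnbhd :: "('a \<Rightarrow> 'a \<Rightarrow> bool) \<Rightarrow> 'a \<Rightarrow> 'a set" where
  "cnbhd E x = insert x {y. E x y}"

fun walk :: "('a \<Rightarrow> 'a \<Rightarrow> bool) \<Rightarrow> 'a list \<Rightarrow> bool" where
  "walk E [] = False"
| "walk E [x] = True"
| "walk E (x # y # xs) = (E x y \<and> walk E (y # xs))"

definition connected_graph :: "'a set \<Rightarrow> ('a \<Rightarrow> 'a \<Rightarrow> bool) \<Rightarrow> bool" where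
  "connected_graph V E \<longleftrightarrow> V \<noteq> {} \<and>
     (\<forall>x\<in>V. \<forall>y\<in>V. \<exists>xs. walk E xs \<and> hd xs = x \<and> last xs = y)"

definition gdist :: "('a \<Rightarrow> 'a \<Rightarrow> bool) \<Rightarrow> 'a \<Rightarrow> 'a \<Rightarrow> nat" where
  "gdist E x y = (LEAST n. \<exists>xs. walk E xs \<and> hd xs = x \<and> last xs = y \<and> length xs = Suc n)"

definition diam :: "'a set \<Rightarrow> ('a \<Rightarrow> 'a \<Rightarrow> bool) \<Rightarrow> nat" where
  "diam V E = Max {gdist E x y | x y. x \<in> V \<and> y \<in> V}"

definition complete_graph :: "'a set \<Rightarrow> ('a \<Rightarrow> 'a \<Rightarrow> bool) \<Rightarrow> bool" where
  "complete_graph V E \<longleftrightarrow> (\<forall>x\<in>V. \<forall>y\<in>V. x \<noteq> y \<longrightarrow> E x y)"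

definition compl_edge :: "'a set \<Rightarrow> ('a \<Rightarrow> 'a \<Rightarrow> bool) \<Rightarrow> 'a \<Rightarrow> 'a \<Rightarrow> bool" where
  "compl_edge V E x y \<longleftrightarrow> x \<in> V \<and> y \<in> V \<and> x \<noteq> y \<and> \<not> E x y"

definition universal_vertex :: "'a set \<Rightarrow> ('a \<Rightarrow> 'a \<Rightarrow> bool) \<Rightarrow> 'a \<Rightarrow> bool" where
  "universal_vertex V E u \<longleftrightarrow> u \<in> V \<and> (\<forall>v\<in>V. v \<noteq> u \<longrightarrow> E u v)"

definition adjacent_twins :: "'a set \<Rightarrow> ('a \<Rightarrow> 'a \<Rightarrow> bool) \<Rightarrow> 'a \<Rightarrow> 'a \<Rightarrow> bool" where
  "adjacent_twins V E u w \<longleftrightarrow> u \<in> V \<and> w \<in> V \<and> u \<noteq> w \<and> cnbhd E u = cnbhd E w"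

definition dominating_set :: "'a set \<Rightarrow> ('a \<Rightarrow> 'a \<Rightarrow> bool) \<Rightarrow> 'a set \<Rightarrow> bool" where
  "dominating_set V E D \<longleftrightarrow> D \<subseteq> V \<and> (\<Union>x\<in>D. cnbhd E x) = V"

definition min_dominating_set :: "'a set \<Rightarrow> ('a \<Rightarrow> 'a \<Rightarrow> bool) \<Rightarrow> 'a set \<Rightarrow> bool" where
  "min_dominating_set V E D \<longleftrightarrow> dominating_set V E D \<and>
     (\<forall>D'. dominating_set V E D' \<longrightarrow> card D \<le> card D')"

definition gamma_pair :: "'a set \<Rightarrow> ('a \<Rightarrow> 'a \<Rightarrow> bool) \<Rightarrow> 'a \<Rightarrow> 'a \<Rightarrow> bool" where
  "gamma_pair V E u w \<longleftrightarrow> min_dominating_set V E {u, w} \<and>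
     cnbhd E u \<inter> cnbhd E w = {} \<and> cnbhd E u \<union> cnbhd E w = V"

definition modprod_E ::
  "'a set \<Rightarrow> ('a \<Rightarrow> 'a \<Rightarrow> bool) \<Rightarrow> 'b set \<Rightarrow> ('b \<Rightarrow> 'b \<Rightarrow> bool) \<Rightarrow> ('a \<times> 'b) \<Rightarrow> ('a \<times> 'b) \<Rightarrow> bool" where
  "modprod_E VG EG VH EH p q \<longleftrightarrow> p \<in> VG \<times> VH \<and> q \<in> VG \<times> VH \<and>
     ((fst p = fst q \<and> EH (snd p) (snd q)) \<or>
      (snd p = snd q \<and> EG (fst p) (fst q)) \<or>
      (EG (fst p) (fst q) \<and> EH (snd p) (snd q)) \<or>
      (compl_edge VG EG (fst p) (fst q) \<and> compl_edge VH EH (snd p) (snd q)))"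

definition strong_resolving_set :: "'a set \<Rightarrow> ('a \<Rightarrow> 'a \<Rightarrow> bool) \<Rightarrow> 'a set \<Rightarrow> bool" where
  "strong_resolving_set V E S \<longleftrightarrow> S \<subseteq> V \<and>
     (\<forall>x\<in>V. \<forall>y\<in>V. x \<noteq> y \<longrightarrow> (\<exists>z\<in>S.
        gdist E y x + gdist E x z = gdist E y z \<or>
        gdist E x y + gdist E y z = gdist E x z))"

text \<open>Positions: M = vertices chosen by Maker, B = vertices chosen by Breaker.
  The game ends when every vertex of V is chosen; Maker wins iff W M holds then.
  mw_M / bw_M : Maker is to move; mw_B / bw_B : Breaker is to move.
  mw_* = Maker has a winning strategy from the position, bw_* = Breaker has one.\<close>

inductive mw_M and mw_B for V :: "'v set" and W :: "'v set \<Rightarrow> bool" where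
  mwM_end: "M \<union> B \<supseteq> V \<Longrightarrow> W M \<Longrightarrow> mw_M V W M B"
| mwB_end: "M \<union> B \<supseteq> V \<Longrightarrow> W M \<Longrightarrow> mw_B V W M B"
| mwM_step: "v \<in> V - (M \<union> B) \<Longrightarrow> mw_B V W (insert v M) B \<Longrightarrow> mw_M V W M B"
| mwB_step: "V - (M \<union> B) \<noteq> {} \<Longrightarrow> (\<And>v. v \<in> V - (M \<union> B) \<Longrightarrow> mw_M V W M (insert v B))
               \<Longrightarrow> mw_B V W M B"

inductive bw_M and bw_B for V :: "'v set" and W :: "'v set \<Rightarrow> bool" where
  bwM_end: "M \<union> B \<supseteq> V \<Longrightarrow> \<not> W M \<Longrightarrow> bw_M V W M B"
| bwB_end: "M \<union> B \<supseteq> V \<Longrightarrow> \<not> W M \<Longrightarrow> bw_B V W M B"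
| bwB_step: "v \<in> V - (M \<union> B) \<Longrightarrow> bw_M V W M (insert v B) \<Longrightarrow> bw_B V W M B"
| bwM_step: "V - (M \<union> B) \<noteq> {} \<Longrightarrow> (\<And>v. v \<in> V - (M \<union> B) \<Longrightarrow> bw_B V W (insert v M) B)
               \<Longrightarrow> bw_M V W M B"

definition sr_win :: "'a set \<Rightarrow> ('a \<Rightarrow> 'a \<Rightarrow> bool) \<Rightarrow> 'a set \<Rightarrow> bool" where
  "sr_win V E M \<longleftrightarrow> (\<exists>S\<subseteq>M. strong_resolving_set V E S)"

datatype outcome = Outcome_M | Outcome_B | Outcome_N | Outcome_P

text \<open>Outcome of the Maker--Breaker strong resolving game. M-game: Maker moves first
  (start position mw_M/bw_M with nothing chosen); B-game: Breaker moves first.\<close>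
definition O_SR :: "'a set \<Rightarrow> ('a \<Rightarrow> 'a \<Rightarrow> bool) \<Rightarrow> outcome" where
  "O_SR V E =
    (let W = sr_win V E in
     if mw_M V W {} {} \<and> mw_B V W {} {} then Outcome_M
     else if bw_M V W {} {} \<and> bw_B V W {} {} then Outcome_B
     else if mw_M V W {} {} \<and> bw_B V W {} {} then Outcome_N
     else Outcome_P)"

end

theory Submission
  imports Defs
begin


definition reach :: "('a \<Rightarrow> 'a \<Rightarrow> bool) \<Rightarrow> 'a \<Rightarrow> 'a \<Rightarrow> bool" where
  "reach E u v \<longleftrightarrow> (\<exists>xs. walk E xs \<and> hd xs = u \<and> last xs = v)"

definition far :: "('a \<Rightarrow> 'a \<Rightarrow> bool) \<Rightarrow> 'a \<Rightarrow> 'a \<Rightarrow> bool" where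
  "far E u v \<longleftrightarrow> u \<noteq> v \<and> \<not> E u v \<and> \<not> (\<exists>w. E u w \<and> E w v)"

lemma gdist_le:
  assumes "walk E xs" "hd xs = u" "last xs = v" "length xs = Suc n"
  shows "gdist E u v \<le> n"
  unfolding gdist_def by (rule Least_le) (use assms in blast)

lemma gdist_ex:
  assumes "reach E u v"
  shows "\<exists>xs. walk E xs \<and> hd xs = u \<and> last xs = v \<and> length xs = Suc (gdist E u v)"
proof -
  from assms obtain xs where xs: "walk E xs" "hd xs = u" "last xs = v" unfolding reach_def by blast
  have "xs \<noteq> []" using xs(1) by auto
  then have "length xs = Suc (length xs - 1)" by simp
  then have "\<exists>n xs. walk E xs \<and> hd xs = u \<and> last xs = v \<and> length xs = Suc n" using xs by blast
  then show ?thesis unfolding gdist_def by (rule LeastI_ex)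
qed

lemma gdist0: "reach E u v \<Longrightarrow> gdist E u v = 0 \<Longrightarrow> u = v"
proof -
  assume "reach E u v" "gdist E u v = 0"
  then obtain xs where "walk E xs" "hd xs = u" "last xs = v" "length xs = Suc 0"
    using gdist_ex by fastforce
  then show "u = v" by (cases xs) auto
qed

lemma gdist1: "reach E u v \<Longrightarrow> gdist E u v = 1 \<Longrightarrow> E u v"
proof -
  assume "reach E u v" "gdist E u v = 1"
  then obtain xs where "walk E xs" "hd xs = u" "last xs = v" "length xs = Suc (Suc 0)"
    using gdist_ex by fastforce
  then show "E u v" by (auto simp: length_Suc_conv)
qed

lemma gdist_ge2: "reach E u v \<Longrightarrow> u \<noteq> v \<Longrightarrow> \<not> E u v \<Longrightarrow> gdist E u v \<ge> 2"
  using gdist0 gdist1 by (metis One_nat_def less_2_cases not_le)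

lemma gdist_far: "reach E u v \<Longrightarrow> far E u v \<Longrightarrow> gdist E u v \<ge> 3"
proof (rule ccontr)
  assume r: "reach E u v" and f: "far E u v" and "\<not> gdist E u v \<ge> 3"
  then have le: "gdist E u v \<le> 2" by simp
  from gdist_ex[OF r] obtain xs where xs: "walk E xs" "hd xs = u" "last xs = v" "length xs = Suc (gdist E u v)" by blast
  then consider "length xs = Suc 0" | "length xs = Suc (Suc 0)" | "length xs = Suc (Suc (Suc 0))"
    using le by linarith
  then show False
  proof cases
    case 1 then show False using xs f unfolding far_def by (auto simp: length_Suc_conv)
  next
    case 2 then show False using xs f unfolding far_def by (auto simp: length_Suc_conv)
  next
    case 3 then show False using xs f unfolding far_def by (auto simp: length_Suc_conv)
  qed
qed

lemma not_far_le2: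
  assumes "\<not> far E u v"
  shows "gdist E u v \<le> 2"
proof -
  consider "u = v" | "E u v" | w where "E u w" "E w v" using assms unfolding far_def by blast
  then show ?thesis
  proof cases
    case 1 then show ?thesis using gdist_le[of E "[u]" u v 0] by simp
  next
    case 2 then show ?thesis using gdist_le[of E "[u,v]" u v 1] by simp
  next
    case 3 then show ?thesis using gdist_le[of E "[u,w,v]" u v 2] by simp
  qed
qed


lemma srs_pair:
  assumes "strong_resolving_set V E S" "u \<in> V" "v \<in> V" "u \<noteq> v"
  obtains z where "z \<in> S" "z \<in> V" "gdist E v u + gdist E u z = gdist E v z \<or> gdist E u v + gdist E v z = gdist E u z"
  using assms unfolding strong_resolving_set_def by blast

lemma forced3:
  assumes R: "\<forall>x\<in>V. \<forall>y\<in>V. reach E x y" and D: "\<forall>x\<in>V. \<forall>y\<in>V. gdist E x y \<le> 3"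
    and uv: "u \<in> V" "v \<in> V" and f: "far E u v" "far E v u"
    and S: "strong_resolving_set V E S"
  shows "u \<in> S \<or> v \<in> S"
proof -
  have ne: "u \<noteq> v" using f unfolding far_def by auto
  obtain z where z: "z \<in> S" "z \<in> V" "gdist E v u + gdist E u z = gdist E v z \<or> gdist E u v + gdist E v z = gdist E u z"
    using srs_pair[OF S uv ne] by blast
  have g1: "gdist E u v \<ge> 3" "gdist E v u \<ge> 3" using gdist_far[of E u v] gdist_far[of E v u] R uv f by auto
  have "gdist E v z \<le> 3" "gdist E u z \<le> 3" using D uv z by auto
  then have "gdist E u z = 0 \<or> gdist E v z = 0" using z(3) g1 by linarith
  moreover have "reach E u z" "reach E v z" using R uv z by auto
  ultimately have "z = u \<or> z = v" using gdist0[of E u z] gdist0[of E v z] by auto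
  then show ?thesis using z by auto
qed

lemma forced2:
  assumes R: "\<forall>x\<in>V. \<forall>y\<in>V. reach E x y"
    and uv: "u \<in> V" "v \<in> V" "u \<noteq> v" "\<not> E u v" "\<not> E v u"
    and nf: "\<forall>z\<in>V. \<not> far E u z \<and> \<not> far E v z"
    and S: "strong_resolving_set V E S"
  shows "u \<in> S \<or> v \<in> S"
proof -
  obtain z where z: "z \<in> S" "z \<in> V" "gdist E v u + gdist E u z = gdist E v z \<or> gdist E u v + gdist E v z = gdist E u z"
    using srs_pair[OF S uv(1,2,3)] by blast
  have g1: "gdist E u v \<ge> 2" "gdist E v u \<ge> 2" using gdist_ge2[of E u v] gdist_ge2[of E v u] R uv by auto
  have "gdist E v z \<le> 2" "gdist E u z \<le> 2" using nf z(2) not_far_le2[of E v z] not_far_le2[of E u z] by auto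
  then have "gdist E u z = 0 \<or> gdist E v z = 0" using z(3) g1 by linarith
  moreover have "reach E u z" "reach E v z" using R uv z by auto
  ultimately have "z = u \<or> z = v" using gdist0[of E u z] gdist0[of E v z] by auto
  then show ?thesis using z by auto
qed

lemma twin_le:
  assumes R: "\<forall>x\<in>V. \<forall>y\<in>V. reach E x y" and irr: "\<forall>x. \<not> E x x"
    and uv: "u \<in> V" "v \<in> V" "E u v"
    and tw: "\<forall>w. w \<noteq> u \<longrightarrow> w \<noteq> v \<longrightarrow> (E u w \<longleftrightarrow> E v w)"
    and z: "z \<in> V" "z \<noteq> u"
  shows "gdist E v z \<le> gdist E u z"
proof -
  obtain xs where xs: "walk E xs" "hd xs = u" "last xs = z" "length xs = Suc (gdist E u z)"
  proof -
    have "reach E u z" using R uv(1) z(1) by blast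
    from gdist_ex[OF this] show ?thesis using that by blast
  qed
  then obtain x1 rest where xs1: "xs = u # x1 # rest"
  proof (cases xs)
    case Nil then show ?thesis using xs by simp
  next
    case (Cons a t)
    then have a: "a = u" using xs by simp
    show ?thesis
    proof (cases t)
      case Nil then show ?thesis using xs \<open>xs = a # t\<close> a z(2) by simp
    next
      case (Cons b r) then show ?thesis using \<open>xs = a # t\<close> a that by blast
    qed
  qed
  have e1: "E u x1" "walk E (x1 # rest)" using xs(1) xs1 by auto
  show ?thesis
  proof (cases "x1 = v")
    case True
    have "gdist E v z \<le> length rest" 
      by (rule gdist_le[of E "x1 # rest"]) (use e1 True xs xs1 in auto)
    then show ?thesis using xs xs1 by simp
  next
    case False
    have "x1 \<noteq> u" using e1 irr by auto
    then have "E v x1" using tw e1(1) False by blast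
    have "gdist E v z \<le> Suc (length rest)" 
      by (rule gdist_le[of E "v # x1 # rest"]) (use e1 \<open>E v x1\<close> xs xs1 in auto)
    then show ?thesis using xs xs1 by simp
  qed
qed

lemma forcedT:
  assumes R: "\<forall>x\<in>V. \<forall>y\<in>V. reach E x y" and irr: "\<forall>x. \<not> E x x"
    and uv: "u \<in> V" "v \<in> V" "u \<noteq> v" "E u v" "E v u"
    and tw: "\<forall>w. w \<noteq> u \<longrightarrow> w \<noteq> v \<longrightarrow> (E u w \<longleftrightarrow> E v w)"
    and S: "strong_resolving_set V E S"
  shows "u \<in> S \<or> v \<in> S"
proof (rule ccontr)
  assume nS: "\<not> (u \<in> S \<or> v \<in> S)"
  obtain z where z: "z \<in> S" "z \<in> V" "gdist E v u + gdist E u z = gdist E v z \<or> gdist E u v + gdist E v z = gdist E u z"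
    using srs_pair[OF S uv(1,2,3)] by blast
  have zz: "z \<noteq> u" "z \<noteq> v" using z nS by auto
  have a: "gdist E v z \<le> gdist E u z" by (rule twin_le[OF R irr uv(1,2,4) tw z(2) zz(1)])
  have b: "gdist E u z \<le> gdist E v z" by (rule twin_le[OF R irr uv(2,1,5) _ z(2) zz(2)]) (use tw in auto)
  have "reach E v u" "reach E u v" using R uv by auto
  then have "gdist E v u \<noteq> 0" "gdist E u v \<noteq> 0" using gdist0[of E v u] gdist0[of E u v] uv(3) by auto
  then show False using z(3) a b by linarith
qed


lemma mw_bw_excl:
  shows "mw_M V W M B \<Longrightarrow> bw_M V W M B \<Longrightarrow> False"
    and "mw_B V W M B \<Longrightarrow> bw_B V W M B \<Longrightarrow> False"
proof (induction rule: mw_M_mw_B.inducts)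
  case (mwM_end M B) then show ?case by (auto elim: bw_M.cases)
next
  case (mwB_end M B) then show ?case by (auto elim: bw_B.cases)
next
  case (mwM_step v M B)
  from mwM_step(4) show ?case
  proof (cases rule: bw_M.cases)
    case bwM_end then show ?thesis using mwM_step(1) by auto
  next
    case bwM_step then show ?thesis using mwM_step(1,3) by blast
  qed
next
  case (mwB_step M B)
  from mwB_step(4) show ?case
  proof (cases rule: bw_B.cases)
    case bwB_end then show ?thesis using mwB_step(1) by auto
  next
    case (bwB_step v) then show ?thesis using mwB_step(3) by blast
  qed
qed
lemma breaker_pairing:
  assumes finV: "finite V" and CV: "C \<subseteq> V"
    and sig: "\<And>x. x \<in> C \<Longrightarrow> \<sigma> x \<in> C \<and> \<sigma> x \<noteq> x \<and> \<sigma> (\<sigma> x) = x"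
    and fin: "\<And>M. (\<forall>x\<in>C. x \<in> M \<longrightarrow> \<sigma> x \<notin> M) \<Longrightarrow> B0 \<inter> M = {} \<Longrightarrow> \<not> W M"
  shows "card (V - (M \<union> B)) = n \<Longrightarrow>
     ((M \<inter> B = {} \<and> B0 \<subseteq> B \<and> (\<forall>x\<in>C. x \<in> M \<longrightarrow> \<sigma> x \<in> B)) \<longrightarrow> bw_M V W M B) \<and>
     ((M \<inter> B = {} \<and> B0 \<subseteq> B \<and> (\<forall>x\<in>C. x \<in> M \<longrightarrow> \<sigma> x \<notin> M) \<and>
       (\<forall>x\<in>C. \<forall>y\<in>C. x \<in> M \<longrightarrow> \<sigma> x \<notin> B \<longrightarrow> y \<in> M \<longrightarrow> \<sigma> y \<notin> B \<longrightarrow> x = y)) \<longrightarrow> bw_B V W M B)"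
proof (induction n arbitrary: M B rule: less_induct)
  case (less n M B)
  have dec: "card (V - (M' \<union> B')) < n" if "v \<in> V - (M \<union> B)" "M' \<union> B' = insert v (M \<union> B)" for v M' B'
  proof -
    have "V - (M' \<union> B') = (V - (M \<union> B)) - {v}" using that by auto
    then show ?thesis using that less.prems finV
      by (metis card_Diff1_less finite_Diff)
  qed
  show ?case
  proof (intro conjI impI)
    assume inv: "M \<inter> B = {} \<and> B0 \<subseteq> B \<and> (\<forall>x\<in>C. x \<in> M \<longrightarrow> \<sigma> x \<in> B)"
    show "bw_M V W M B"
    proof (cases "V \<subseteq> M \<union> B")
      case True
      have "\<not> W M"
        apply (rule fin) using inv by auto
      then show ?thesis using True by (rule bwM_end[rotated])
    next
      case False
      show ?thesis
      proof (rule bwM_step)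
        show "V - (M \<union> B) \<noteq> {}" using False by auto
      next
        fix v assume v: "v \<in> V - (M \<union> B)"
        have c: "card (V - (insert v M \<union> B)) < n" by (rule dec[OF v]) auto
        have i: "insert v M \<inter> B = {} \<and> B0 \<subseteq> B \<and> (\<forall>x\<in>C. x \<in> insert v M \<longrightarrow> \<sigma> x \<notin> insert v M) \<and>
       (\<forall>x\<in>C. \<forall>y\<in>C. x \<in> insert v M \<longrightarrow> \<sigma> x \<notin> B \<longrightarrow> y \<in> insert v M \<longrightarrow> \<sigma> y \<notin> B \<longrightarrow> x = y)"
        proof -
          have "\<forall>x\<in>C. x \<in> insert v M \<longrightarrow> \<sigma> x \<notin> insert v M"
          proof (intro ballI impI notI)
            fix x assume x: "x \<in> C" "x \<in> insert v M" "\<sigma> x \<in> insert v M"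
            have sx: "\<sigma> x \<in> C" "\<sigma> (\<sigma> x) = x" "\<sigma> x \<noteq> x" using sig[OF x(1)] by auto
            show False
            proof (cases "x = v")
              case True
              then have "\<sigma> x \<in> M" using x sx by auto
              then have "\<sigma> (\<sigma> x) \<in> B" using inv sx by blast
              then show False using sx True v by auto
            next
              case False
              then have "x \<in> M" using x by auto
              then have "\<sigma> x \<in> B" using inv x by blast
              then show False using x inv v by auto
            qed
          qed
          moreover have "\<forall>x\<in>C. \<forall>y\<in>C. x \<in> insert v M \<longrightarrow> \<sigma> x \<notin> B \<longrightarrow> y \<in> insert v M \<longrightarrow> \<sigma> y \<notin> B \<longrightarrow> x = y"
          proof (intro ballI impI)
            fix x y assume "x \<in> C" "y \<in> C" "x \<in> insert v M" "\<sigma> x \<notin> B" "y \<in> insert v M" "\<sigma> y \<notin> B"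
            then have "x = v" "y = v" using inv by blast+
            then show "x = y" by simp
          qed
          moreover have "insert v M \<inter> B = {}" using inv v by blast
          ultimately show ?thesis using inv by blast
        qed
        show "bw_B V W (insert v M) B" using less.IH[OF c refl] i by blast
      qed
    qed
  next
    assume inv: "M \<inter> B = {} \<and> B0 \<subseteq> B \<and> (\<forall>x\<in>C. x \<in> M \<longrightarrow> \<sigma> x \<notin> M) \<and>
       (\<forall>x\<in>C. \<forall>y\<in>C. x \<in> M \<longrightarrow> \<sigma> x \<notin> B \<longrightarrow> y \<in> M \<longrightarrow> \<sigma> y \<notin> B \<longrightarrow> x = y)"
    show "bw_B V W M B"
    proof (cases "V \<subseteq> M \<union> B")
      case True
      have "\<not> W M"
        apply (rule fin) using inv by auto
      then show ?thesis using True by (rule bwB_end[rotated])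
    next
      case False
      show ?thesis
      proof (cases "\<exists>x\<in>C. x \<in> M \<and> \<sigma> x \<notin> B")
        case True
        then obtain x where x: "x \<in> C" "x \<in> M" "\<sigma> x \<notin> B" by blast
        have v: "\<sigma> x \<in> V - (M \<union> B)" using x inv sig[OF x(1)] CV by auto
        have c: "card (V - (M \<union> insert (\<sigma> x) B)) < n" by (rule dec[OF v]) auto
        have i: "M \<inter> insert (\<sigma> x) B = {} \<and> B0 \<subseteq> insert (\<sigma> x) B \<and> (\<forall>y\<in>C. y \<in> M \<longrightarrow> \<sigma> y \<in> insert (\<sigma> x) B)"
        proof (intro conjI ballI impI)
          fix y assume y: "y \<in> C" "y \<in> M"
          show "\<sigma> y \<in> insert (\<sigma> x) B"
          proof (cases "\<sigma> y \<in> B")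
            case False
            then have "y = x" using inv x y by blast
            then show ?thesis by simp
          qed simp
        qed (use inv x v in blast)+
        have "bw_M V W M (insert (\<sigma> x) B)" using less.IH[OF c refl] i by blast
        then show ?thesis by (rule bwB_step[OF v])
      next
        case False2: False
        from False obtain v where v: "v \<in> V - (M \<union> B)" by auto
        have c: "card (V - (M \<union> insert v B)) < n" by (rule dec[OF v]) auto
        have i: "M \<inter> insert v B = {} \<and> B0 \<subseteq> insert v B \<and> (\<forall>y\<in>C. y \<in> M \<longrightarrow> \<sigma> y \<in> insert v B)"
          using inv v False2 by blast
        have "bw_M V W M (insert v B)" using less.IH[OF c refl] i by blast
        then show ?thesis by (rule bwB_step[OF v])
      qed
    qed
  qed
qed


lemma walk_set: "graph V E \<Longrightarrow> walk E xs \<Longrightarrow> hd xs \<in> V \<Longrightarrow> set xs \<subseteq> V"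
proof (induction E xs rule: walk.induct)
  case (3 E x y xs) then show ?case unfolding graph_def by auto
qed auto

lemma walk_append: "walk E xs \<Longrightarrow> walk E ys \<Longrightarrow> last xs = hd ys \<Longrightarrow>
   walk E (xs @ tl ys) \<and> hd (xs @ tl ys) = hd xs \<and> last (xs @ tl ys) = last ys"
proof (induction E xs rule: walk.induct)
  case (2 E x) then show ?case by (cases ys) auto
next
  case (3 E x y xs) then show ?case by (cases xs) auto
qed auto

lemma reach_trans: "reach E x y \<Longrightarrow> reach E y z \<Longrightarrow> reach E x z"
  unfolding reach_def using walk_append by metis

context
  fixes VG :: "'a set" and EG and VH :: "'b set" and EH
  assumes gG: "graph VG EG" and gH: "graph VH EH"
begin

lemma EGV: "EG x y \<Longrightarrow> x \<in> VG \<and> y \<in> VG" using gG unfolding graph_def by blast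
lemma EHV: "EH x y \<Longrightarrow> x \<in> VH \<and> y \<in> VH" using gH unfolding graph_def by blast
lemma EGs: "EG x y \<Longrightarrow> EG y x" using gG unfolding graph_def by blast
lemma EHs: "EH x y \<Longrightarrow> EH y x" using gH unfolding graph_def by blast
lemma EGi: "\<not> EG x x" using gG unfolding graph_def by blast
lemma EHi: "\<not> EH x x" using gH unfolding graph_def by blast

lemma mp_sym: "modprod_E VG EG VH EH p q \<Longrightarrow> modprod_E VG EG VH EH q p"
  unfolding modprod_E_def compl_edge_def using EGs EHs by auto

lemma mp_irr: "\<not> modprod_E VG EG VH EH p p"
  unfolding modprod_E_def compl_edge_def using EGi EHi by auto

lemma lift1: "walk EG xs \<Longrightarrow> set xs \<subseteq> VG \<Longrightarrow> h \<in> VH \<Longrightarrow>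
   walk (modprod_E VG EG VH EH) (map (\<lambda>a. (a, h)) xs)"
  by (induction EG xs rule: walk.induct) (auto simp: modprod_E_def)

lemma lift2: "walk EH xs \<Longrightarrow> set xs \<subseteq> VH \<Longrightarrow> g \<in> VG \<Longrightarrow>
   walk (modprod_E VG EG VH EH) (map (\<lambda>b. (g, b)) xs)"
  by (induction EH xs rule: walk.induct) (auto simp: modprod_E_def)

lemma prod_reach:
  assumes cG: "connected_graph VG EG" and cH: "connected_graph VH EH"
    and p: "p \<in> VG \<times> VH" and q: "q \<in> VG \<times> VH"
  shows "reach (modprod_E VG EG VH EH) p q"
proof -
  obtain g h g' h' where pq: "p = (g, h)" "q = (g', h')" "g \<in> VG" "h \<in> VH" "g' \<in> VG" "h' \<in> VH"
    using p q by auto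
  obtain xs where xs: "walk EG xs" "hd xs = g" "last xs = g'" using cG pq unfolding connected_graph_def by blast
  obtain ys where ys: "walk EH ys" "hd ys = h" "last ys = h'" using cH pq unfolding connected_graph_def by blast
  have ne: "xs \<noteq> []" "ys \<noteq> []" using xs ys by auto
  have "set xs \<subseteq> VG" using walk_set[OF gG xs(1)] xs pq by auto
  then have w1: "walk (modprod_E VG EG VH EH) (map (\<lambda>a. (a, h)) xs)" using lift1 xs pq by auto
  have "set ys \<subseteq> VH" using walk_set[OF gH ys(1)] ys pq by auto
  then have w2: "walk (modprod_E VG EG VH EH) (map (\<lambda>b. (g', b)) ys)" using lift2 ys pq by auto
  have "reach (modprod_E VG EG VH EH) (g, h) (g', h)"
    unfolding reach_def using w1 xs ne by (auto simp: hd_map last_map)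
  moreover have "reach (modprod_E VG EG VH EH) (g', h) (g', h')"
    unfolding reach_def using w2 ys ne by (auto simp: hd_map last_map)
  ultimately show ?thesis using reach_trans pq by metis
qed

lemma diam_bound:
  assumes "diam (VG \<times> VH) E = 3" and "x \<in> VG \<times> VH" "y \<in> VG \<times> VH"
  shows "gdist E x y \<le> 3"
proof -
  have fin: "finite (VG \<times> VH)" using gG gH unfolding graph_def by auto
  have "{gdist E x y | x y. x \<in> VG \<times> VH \<and> y \<in> VG \<times> VH} = (\<lambda>(x,y). gdist E x y) ` ((VG \<times> VH) \<times> (VG \<times> VH))"
    by auto
  then have "finite {gdist E x y | x y. x \<in> VG \<times> VH \<and> y \<in> VG \<times> VH}" using fin by simp
  then have "gdist E x y \<le> diam (VG \<times> VH) E" unfolding diam_def using assms(2,3)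
    by (intro Max_ge) auto
  then show ?thesis using assms(1) by simp
qed

end


context
  fixes VG :: "'a set" and EG and VH :: "'b set" and EH
  assumes gG: "graph VG EG" and gH: "graph VH EH"
begin

abbreviation "PE \<equiv> modprod_E VG EG VH EH"

lemma EGc: "EG x y = EG y x" using EGs[OF gG gH] by blast
lemma EHc: "EH x y = EH y x" using EHs[OF gG gH] by blast

lemma nbr_cases:
  assumes "PE (a,b) (e,f)"
  shows "((e = a \<or> EG a e) \<and> (f = b \<or> EH b f)) \<or>
         (e \<in> VG \<and> f \<in> VH \<and> \<not> (e = a \<or> EG a e) \<and> \<not> (f = b \<or> EH b f))"
  using assms unfolding modprod_E_def compl_edge_def by auto

lemma farH:
  assumes ac: "a \<in> VG" "c \<in> VG" and bd: "b \<in> VH" "d \<in> VH"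
    and tw: "\<forall>e. (e = a \<or> EG a e) \<longleftrightarrow> (e = c \<or> EG c e)"
    and dj: "\<forall>f. \<not> ((f = b \<or> EH b f) \<and> (f = d \<or> EH d f))"
    and cov: "(\<forall>f\<in>VH. f = b \<or> EH b f \<or> f = d \<or> EH d f) \<or> (\<forall>e\<in>VG. e = a \<or> EG a e)"
  shows "far PE (a,b) (c,d)"
  unfolding far_def
proof (intro conjI notI)
  show "(a, b) = (c, d) \<Longrightarrow> False" using dj by auto
next
  assume "PE (a, b) (c, d)"
  then show False using dj tw unfolding modprod_E_def compl_edge_def by auto
next
  assume "\<exists>w. PE (a, b) w \<and> PE w (c, d)"
  then obtain e f where w: "PE (a, b) (e,f)" "PE (e,f) (c, d)" by auto
  have w2: "PE (c,d) (e,f)" using mp_sym[OF gG gH w(2)] .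
  from nbr_cases[OF w(1)] nbr_cases[OF w2] show False
  proof (elim disjE conjE)
  qed (use dj tw cov in blast)+
qed

lemma farG:
  assumes ac: "a \<in> VG" "c \<in> VG" and bd: "b \<in> VH" "d \<in> VH"
    and tw: "\<forall>f. (f = b \<or> EH b f) \<longleftrightarrow> (f = d \<or> EH d f)"
    and dj: "\<forall>e. \<not> ((e = a \<or> EG a e) \<and> (e = c \<or> EG c e))"
    and cov: "\<forall>e\<in>VG. e = a \<or> EG a e \<or> e = c \<or> EG c e"
  shows "far PE (a,b) (c,d)"
  unfolding far_def
proof (intro conjI notI)
  show "(a, b) = (c, d) \<Longrightarrow> False" using dj by auto
next
  assume "PE (a, b) (c, d)"
  then show False using dj tw unfolding modprod_E_def compl_edge_def by auto
next
  assume "\<exists>w. PE (a, b) w \<and> PE w (c, d)"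
  then obtain e f where w: "PE (a, b) (e,f)" "PE (e,f) (c, d)" by auto
  have w2: "PE (c,d) (e,f)" using mp_sym[OF gG gH w(2)] .
  from nbr_cases[OF w(1)] nbr_cases[OF w2] show False
  proof (elim disjE conjE)
  qed (use dj tw cov in blast)+
qed

end


context
  fixes VG :: "'a set" and EG and VH :: "'b set" and EH
  assumes gG: "graph VG EG" and gH: "graph VH EH"
begin

lemma char_far:
  assumes noUG: "\<forall>a\<in>VG. \<exists>e\<in>VG. \<not> (e = a \<or> EG a e)"
    and noUH: "\<forall>b\<in>VH. \<exists>f\<in>VH. \<not> (f = b \<or> EH b f)"
    and noGP: "\<forall>a\<in>VG. \<forall>c\<in>VG. \<not> ((\<forall>e. \<not> ((e = a \<or> EG a e) \<and> (e = c \<or> EG c e))) \<and>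
                     (\<forall>e\<in>VG. e = a \<or> EG a e \<or> e = c \<or> EG c e))"
    and ac: "a \<in> VG" "c \<in> VG" and bd: "b \<in> VH" "d \<in> VH"
    and fr: "far (PE VG EG VH EH) (a,b) (c,d)"
  shows "(\<forall>f. \<not> ((f = b \<or> EH b f) \<and> (f = d \<or> EH d f))) \<and> (\<forall>f\<in>VH. f = b \<or> EH b f \<or> f = d \<or> EH d f)"
proof -
  note EGc = EGc[OF gG gH] and EHc = EHc[OF gG gH]
  note EGi = EGi[OF gG gH] and EHi = EHi[OF gG gH]
  note simps = modprod_E_def compl_edge_def
  have neq: "(a,b) \<noteq> (c,d)" and nadj: "\<not> PE VG EG VH EH (a,b) (c,d)"
    and nc: "\<And>e f. PE VG EG VH EH (a,b) (e,f) \<Longrightarrow> PE VG EG VH EH (e,f) (c,d) \<Longrightarrow> False"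
    using fr unfolding far_def by auto
  have djG: "\<forall>e. \<not> ((e = a \<or> EG a e) \<and> (e = c \<or> EG c e))"
    if "a \<noteq> c" "\<not> EG a c" "\<not> (\<exists>e. EG a e \<and> EG e c)" using that EGc by metis
  have C1: "\<forall>f. \<not> ((f = b \<or> EH b f) \<and> (f = d \<or> EH d f))"
  proof (intro allI notI)
    fix f assume ff: "(f = b \<or> EH b f) \<and> (f = d \<or> EH d f)"
    consider "b = d" | "b \<noteq> d" "EH b d" | "b \<noteq> d" "\<not> EH b d" by blast
    then show False
    proof cases
      case 1
      have anc: "a \<noteq> c" using neq 1 by auto
      show False
      proof (cases "EG a c")
        case True then show False using nadj 1 ac bd by (auto simp: simps)
      next
        case nac: False
        show False
        proof (cases "\<exists>e. EG a e \<and> EG e c")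
          case True
          then obtain e where e: "EG a e" "EG e c" by blast
          show False by (rule nc[of e b]) (use e 1 ac bd EGV[OF gG gH, of a e] in \<open>auto simp: simps\<close>)
        next
          case False
          note dj = djG[OF anc nac False]
          show False
          proof (cases "\<exists>e\<in>VG. \<not> (e = a \<or> EG a e) \<and> \<not> (e = c \<or> EG c e)")
            case True
            then obtain e where e: "e \<in> VG" "\<not> (e = a \<or> EG a e)" "\<not> (e = c \<or> EG c e)" by blast
            obtain f' where f': "f' \<in> VH" "\<not> (f' = b \<or> EH b f')" using noUH bd by blast
            show False by (rule nc[of e f']) (use e f' 1 ac bd EGc EHc in \<open>auto simp: simps\<close>)
          next
            case False
            then show False using noGP ac dj by blast
          qed
        qed
      qed
    next
      case 2
      show False
      proof (cases "a = c \<or> EG a c")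
        case True then show False using nadj 2 ac bd by (auto simp: simps)
      next
        case False
        then have anc: "a \<noteq> c" and nac: "\<not> EG a c" by auto
        show False
        proof (cases "\<exists>e. EG a e \<and> EG e c")
          case True
          then obtain e where e: "EG a e" "EG e c" by blast
          show False by (rule nc[of e b]) (use e 2 ac bd EGV[OF gG gH, of a e] in \<open>auto simp: simps\<close>)
        next
          case False
          note dj = djG[OF anc nac False]
          show False
          proof (cases "\<exists>f'. EH b f' \<and> f' \<noteq> d \<and> \<not> EH d f'")
            case True
            then obtain f' where f': "EH b f'" "f' \<noteq> d" "\<not> EH d f'" by blast
            show False by (rule nc[of a f']) (use f' anc nac ac bd EHV[OF gG gH, of b f'] EHc in \<open>auto simp: simps\<close>)
          next
            case nb: False
            show False
            proof (cases "\<exists>f'. EH d f' \<and> f' \<noteq> b \<and> \<not> EH b f'")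
              case True
              then obtain f' where f': "EH d f'" "f' \<noteq> b" "\<not> EH b f'" by blast
              show False by (rule nc[of c f']) (use f' anc nac ac bd EHV[OF gG gH, of d f'] EHc EGc in \<open>auto simp: simps\<close>)
            next
              case nd: False
              obtain f' where f': "f' \<in> VH" "\<not> (f' = b \<or> EH b f')" using noUH bd by blast
              have f'd: "\<not> (f' = d \<or> EH d f')" using f' nd 2 EHc by metis
              show False
              proof (cases "\<exists>e\<in>VG. \<not> (e = a \<or> EG a e) \<and> \<not> (e = c \<or> EG c e)")
                case True
                then obtain e where e: "e \<in> VG" "\<not> (e = a \<or> EG a e)" "\<not> (e = c \<or> EG c e)" by blast
                show False by (rule nc[of e f']) (use e f' f'd ac bd EGc EHc in \<open>auto simp: simps\<close>)
              next
                case False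
                then show False using noGP ac dj by blast
              qed
            qed
          qed
        qed
      qed
    next
      case 3
      then have fb: "EH b f" "EH d f" using ff EHc by auto
      show False
      proof (cases "a = c \<or> EG a c")
        case True
        show False by (rule nc[of a f]) (use True fb ac bd EHc EHV[OF gG gH, of b f] in \<open>auto simp: simps\<close>)
      next
        case False then show False using nadj 3 ac bd EGc by (auto simp: simps)
      qed
    qed
  qed
  have bnd: "b \<noteq> d" "\<not> EH b d" using C1 by auto
  have C2: "\<forall>f\<in>VH. f = b \<or> EH b f \<or> f = d \<or> EH d f"
  proof (rule ccontr)
    assume "\<not> ?thesis"
    then obtain f where f: "f \<in> VH" "\<not> (f = b \<or> EH b f)" "\<not> (f = d \<or> EH d f)" by blast
    show False
    proof (cases "a = c")
      case True
      obtain e where e: "e \<in> VG" "\<not> (e = a \<or> EG a e)" using noUG ac by blast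
      show False by (rule nc[of e f]) (use True e f ac bd bnd EGc EHc in \<open>auto simp: simps\<close>)
    next
      case anc: False
      show False
      proof (cases "EG a c")
        case nac: False
        then show False using nadj anc bnd ac bd EGc by (auto simp: simps)
      next
        case True
        show False
        proof (cases "\<exists>e. EG a e \<and> e \<noteq> c \<and> \<not> EG c e")
          case True
          then obtain e where e: "EG a e" "e \<noteq> c" "\<not> EG c e" by blast
          show False by (rule nc[of e b]) (use e ac bd bnd EGc EGV[OF gG gH, of a e] in \<open>auto simp: simps\<close>)
        next
          case na: False
          show False
          proof (cases "\<exists>e. EG c e \<and> e \<noteq> a \<and> \<not> EG a e")
            case True
            then obtain e where e: "EG c e" "e \<noteq> a" "\<not> EG a e" by blast
            show False by (rule nc[of e d]) (use e ac bd bnd EGc EGV[OF gG gH, of c e] in \<open>auto simp: simps\<close>)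
          next
            case nc2: False
            obtain e where e: "e \<in> VG" "\<not> (e = a \<or> EG a e)" using noUG ac by blast
            have ec: "\<not> (e = c \<or> EG c e)" using e nc2 True by auto
            show False by (rule nc[of e f]) (use e ec f ac bd EGc EHc in \<open>auto simp: simps\<close>)
          qed
        qed
      qed
    qed
  qed
  show ?thesis using C1 C2 by blast
qed

end


lemma outcomeB:
  assumes "bw_M V (sr_win V E) {} {}" "bw_B V (sr_win V E) {} {}"
  shows "O_SR V E = Outcome_B"
proof -
  have "\<not> mw_M V (sr_win V E) {} {}" using mw_bw_excl(1) assms(1) by blast
  then show ?thesis using assms unfolding O_SR_def Let_def by auto
qed

lemma quad_win:
  assumes finV: "finite V" and inV: "a \<in> V" "b \<in> V" "c \<in> V" "d \<in> V"
    and dist: "a \<noteq> c" "b \<noteq> d" "a \<noteq> b" "a \<noteq> d" "c \<noteq> b" "c \<noteq> d"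
    and fab: "\<forall>S. strong_resolving_set V E S \<longrightarrow> a \<in> S \<or> b \<in> S"
    and fad: "\<forall>S. strong_resolving_set V E S \<longrightarrow> a \<in> S \<or> d \<in> S"
    and fcb: "\<forall>S. strong_resolving_set V E S \<longrightarrow> c \<in> S \<or> b \<in> S"
    and fcd: "\<forall>S. strong_resolving_set V E S \<longrightarrow> c \<in> S \<or> d \<in> S"
  shows "O_SR V E = Outcome_B"
proof -
  define \<sigma> where "\<sigma> = (\<lambda>x. if x = a then c else if x = c then a else if x = b then d else b)"
  have sig: "\<sigma> x \<in> {a,b,c,d} \<and> \<sigma> x \<noteq> x \<and> \<sigma> (\<sigma> x) = x" if "x \<in> {a,b,c,d}" for x
    using that dist unfolding \<sigma>_def by auto
  have fin: "\<not> sr_win V E M" if "\<forall>x\<in>{a,b,c,d}. x \<in> M \<longrightarrow> \<sigma> x \<notin> M" "{} \<inter> M = {}" for M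
  proof
    assume "sr_win V E M"
    then obtain S where S: "S \<subseteq> M" "strong_resolving_set V E S" unfolding sr_win_def by blast
    have "\<not> (a \<in> M \<and> c \<in> M)" "\<not> (b \<in> M \<and> d \<in> M)" using that(1) dist unfolding \<sigma>_def by auto
    moreover have "a \<in> S \<or> b \<in> S" "a \<in> S \<or> d \<in> S" "c \<in> S \<or> b \<in> S" "c \<in> S \<or> d \<in> S"
      using fab fad fcb fcd S(2) by auto
    ultimately show False using S(1) by blast
  qed
  have CV: "{a,b,c,d} \<subseteq> V" using inV by auto
  note P = breaker_pairing[where W="sr_win V E" and M="{}" and B="{}" and C="{a,b,c,d}" and \<sigma>=\<sigma> and B0="{}", OF finV CV sig fin refl]
  have m: "bw_M V (sr_win V E) {} {}" using conjunct1[OF P] by simp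
  have b: "bw_B V (sr_win V E) {} {}" using conjunct2[OF P] by simp
  show ?thesis using m b by (rule outcomeB)
qed

lemma star_pos:
  assumes finV: "finite V" and inV: "q \<in> V" "r \<in> V" and qr: "q \<noteq> r"
    and ftq: "\<forall>S. strong_resolving_set V E S \<longrightarrow> t \<in> S \<or> q \<in> S"
    and ftr: "\<forall>S. strong_resolving_set V E S \<longrightarrow> t \<in> S \<or> r \<in> S"
    and pos: "M \<inter> B = {}" "t \<in> B" "q \<notin> M" "r \<notin> M"
  shows "bw_M V (sr_win V E) M B"
proof -
  define \<sigma> where "\<sigma> = (\<lambda>x. if x = q then r else q)"
  have sig: "\<sigma> x \<in> {q,r} \<and> \<sigma> x \<noteq> x \<and> \<sigma> (\<sigma> x) = x" if "x \<in> {q,r}" for x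
    using that qr unfolding \<sigma>_def by auto
  have fin: "\<not> sr_win V E M" if "\<forall>x\<in>{q,r}. x \<in> M \<longrightarrow> \<sigma> x \<notin> M" "{t} \<inter> M = {}" for M
  proof
    assume "sr_win V E M"
    then obtain S where S: "S \<subseteq> M" "strong_resolving_set V E S" unfolding sr_win_def by blast
    have "\<not> (q \<in> M \<and> r \<in> M)" "t \<notin> M" using that qr unfolding \<sigma>_def by auto
    moreover have "t \<in> S \<or> q \<in> S" "t \<in> S \<or> r \<in> S"
      using ftq ftr S(2) by auto
    ultimately show False using S(1) by blast
  qed
  have CV: "{q,r} \<subseteq> V" using inV by auto
  note P = breaker_pairing[where W="sr_win V E" and M=M and B=B and C="{q,r}" and \<sigma>=\<sigma> and B0="{t}", OF finV CV sig fin refl]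
  have "M \<inter> B = {} \<and> {t} \<subseteq> B \<and> (\<forall>x\<in>{q,r}. x \<in> M \<longrightarrow> \<sigma> x \<in> B)" using pos by auto
  then show ?thesis using conjunct1[OF P] by blast
qed

lemma star2_win:
  assumes finV: "finite V" and inV: "t1 \<in> V" "q1 \<in> V" "r1 \<in> V" "t2 \<in> V" "q2 \<in> V" "r2 \<in> V"
    and d1: "q1 \<noteq> r1" "t1 \<noteq> q1" "t1 \<noteq> r1" and d2: "q2 \<noteq> r2" "t2 \<noteq> q2" "t2 \<noteq> r2"
    and d12: "{t1,q1,r1} \<inter> {t2,q2,r2} = {}"
    and f1: "\<forall>S. strong_resolving_set V E S \<longrightarrow> t1 \<in> S \<or> q1 \<in> S"
            "\<forall>S. strong_resolving_set V E S \<longrightarrow> t1 \<in> S \<or> r1 \<in> S"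
    and f2: "\<forall>S. strong_resolving_set V E S \<longrightarrow> t2 \<in> S \<or> q2 \<in> S"
            "\<forall>S. strong_resolving_set V E S \<longrightarrow> t2 \<in> S \<or> r2 \<in> S"
  shows "O_SR V E = Outcome_B"
proof (rule outcomeB)
  have "bw_M V (sr_win V E) {} {t1}"
    by (rule star_pos[OF finV inV(2,3) d1(1) f1]) (use d1 in auto)
  then show "bw_B V (sr_win V E) {} {}"
    by (intro bwB_step[of t1]) (use inV in auto)
next
  show "bw_M V (sr_win V E) {} {}"
  proof (rule bwM_step)
    show "V - ({} \<union> {}) \<noteq> {}" using inV by auto
  next
    fix v assume v: "v \<in> V - ({} \<union> {})"
    show "bw_B V (sr_win V E) (insert v {}) {}"
    proof (cases "v \<in> {t1,q1,r1}")
      case False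
      have "bw_M V (sr_win V E) {v} {t1}"
        by (rule star_pos[OF finV inV(2,3) d1(1) f1]) (use False in auto)
      then show ?thesis by (intro bwB_step[of t1]) (use inV False in auto)
    next
      case True
      then have v2: "v \<notin> {t2,q2,r2}" using d12 by auto
      have "bw_M V (sr_win V E) {v} {t2}"
        by (rule star_pos[OF finV inV(5,6) d2(1) f2]) (use v2 in auto)
      then show ?thesis by (intro bwB_step[of t2]) (use inV v2 in auto)
    qed
  qed
qed


lemma cnbhd_sub: "graph V E \<Longrightarrow> x \<in> V \<Longrightarrow> cnbhd E x \<subseteq> V"
  unfolding graph_def cnbhd_def by auto

lemma gp_props:
  assumes "graph V E" "gamma_pair V E u w"
  shows "u \<in> V \<and> w \<in> V \<and> (\<forall>f. \<not> ((f = u \<or> E u f) \<and> (f = w \<or> E w f))) \<and>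
         (\<forall>f\<in>V. f = u \<or> E u f \<or> f = w \<or> E w f)"
proof -
  have i: "cnbhd E u \<inter> cnbhd E w = {}" and un: "cnbhd E u \<union> cnbhd E w = V"
    using assms(2) unfolding gamma_pair_def by auto
  have "u \<in> V" "w \<in> V" using un unfolding cnbhd_def by auto
  moreover have "\<forall>f. \<not> ((f = u \<or> E u f) \<and> (f = w \<or> E w f))"
    using i unfolding cnbhd_def by auto
  moreover have "\<forall>f\<in>V. f = u \<or> E u f \<or> f = w \<or> E w f"
    using un unfolding cnbhd_def by auto
  ultimately show ?thesis by blast
qed

lemma univ_cnbhd: "graph V E \<Longrightarrow> z \<in> V \<Longrightarrow> (\<forall>f\<in>V. f = z \<or> E z f) \<Longrightarrow> cnbhd E z = V"
  unfolding graph_def cnbhd_def by auto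

lemma gp_no_univ:
  assumes g: "graph V E" and gp: "gamma_pair V E h h'"
  shows "\<forall>b\<in>V. \<exists>f\<in>V. \<not> (f = b \<or> E b f)"
proof (rule ccontr)
  assume "\<not> ?thesis"
  then obtain z where z: "z \<in> V" "\<forall>f\<in>V. f = z \<or> E z f" by blast
  have "dominating_set V E {z}" unfolding dominating_set_def using univ_cnbhd[OF g z] z by auto
  then have le: "card {h, h'} \<le> card {z}" using gp unfolding gamma_pair_def min_dominating_set_def by blast
  have "h \<noteq> h'" using gp_props[OF g gp] by blast
  then show False using le by simp
qed

lemma like_gp:
  assumes g: "graph V E" and ne: "V \<noteq> {}" and nu: "\<forall>b\<in>V. \<exists>f\<in>V. \<not> (f = b \<or> E b f)"
    and uw: "u \<in> V" "w \<in> V"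
    and dj: "\<forall>f. \<not> ((f = u \<or> E u f) \<and> (f = w \<or> E w f))"
    and cov: "\<forall>f\<in>V. f = u \<or> E u f \<or> f = w \<or> E w f"
  shows "gamma_pair V E u w"
proof -
  have i: "cnbhd E u \<inter> cnbhd E w = {}" using dj unfolding cnbhd_def by auto
  have un: "cnbhd E u \<union> cnbhd E w = V"
    using cov cnbhd_sub[OF g uw(1)] cnbhd_sub[OF g uw(2)] unfolding cnbhd_def by auto
  have uw2: "u \<noteq> w" using dj by auto
  have finV: "finite V" using g unfolding graph_def by auto
  have dom: "dominating_set V E {u, w}" unfolding dominating_set_def using uw un by auto
  have "card {u, w} \<le> card D'" if D': "dominating_set V E D'" for D'
  proof (rule ccontr)
    assume "\<not> card {u, w} \<le> card D'"
    then have c: "card D' \<le> Suc 0" using uw2 by simp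
    have DV: "D' \<subseteq> V" and DU: "(\<Union>x\<in>D'. cnbhd E x) = V" using D' unfolding dominating_set_def by auto
    have fD: "finite D'" using DV finV finite_subset by blast
    have "\<forall>a\<in>D'. \<forall>b\<in>D'. a = b" using c card_le_Suc0_iff_eq[OF fD] by blast
    show False
    proof (cases "D' = {}")
      case True then show False using DU ne by auto
    next
      case False
      then obtain z where z: "z \<in> D'" by blast
      then have "D' = {z}" using \<open>\<forall>a\<in>D'. \<forall>b\<in>D'. a = b\<close> by blast
      then have "cnbhd E z = V" using DU by simp
      then have "\<forall>f\<in>V. f = z \<or> E z f" unfolding cnbhd_def by auto
      then show False using nu z DV by blast
    qed
  qed
  then have "min_dominating_set V E {u, w}" unfolding min_dominating_set_def using dom by blast
  then show ?thesis unfolding gamma_pair_def using i un by blast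
qed

lemma noU: "(\<nexists>u. universal_vertex V E u) \<Longrightarrow> \<forall>a\<in>V. \<exists>e\<in>V. \<not> (e = a \<or> E a e)"
  unfolding universal_vertex_def by blast


lemma two_elems: "finite V \<Longrightarrow> card V \<ge> 2 \<Longrightarrow> \<exists>a\<in>V. \<exists>b\<in>V. a \<noteq> b"
  using card_le_Suc0_iff_eq by fastforce

lemma has_edge:
  assumes g: "graph V E" and c: "connected_graph V E" and cd: "card V \<ge> 2"
  shows "\<exists>a b. E a b"
proof -
  have "finite V" using g unfolding graph_def by auto
  then obtain a b where ab: "a \<in> V" "b \<in> V" "a \<noteq> b" using two_elems cd by blast
  then obtain xs where xs: "walk E xs" "hd xs = a" "last xs = b" using c unfolding connected_graph_def by blast
  show ?thesis
  proof (cases xs)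
    case Nil then show ?thesis using xs by simp
  next
    case (Cons p t)
    show ?thesis
    proof (cases t)
      case Nil then show ?thesis using xs Cons ab by simp
    next
      case (Cons q r) then show ?thesis using xs \<open>xs = p # t\<close> by auto
    qed
  qed
qed

lemma diam_far:
  assumes g: "graph V E" and ne: "V \<noteq> {}" and d: "diam V E \<ge> 3"
  shows "\<exists>x\<in>V. \<exists>y\<in>V. far E x y"
proof -
  have finV: "finite V" using g unfolding graph_def by auto
  have eq: "{gdist E x y | x y. x \<in> V \<and> y \<in> V} = (\<lambda>(x,y). gdist E x y) ` (V \<times> V)" by auto
  have fin: "finite {gdist E x y | x y. x \<in> V \<and> y \<in> V}" unfolding eq using finV by simp
  have nemp: "{gdist E x y | x y. x \<in> V \<and> y \<in> V} \<noteq> {}" using ne by auto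
  have "Max {gdist E x y | x y. x \<in> V \<and> y \<in> V} \<in> {gdist E x y | x y. x \<in> V \<and> y \<in> V}"
    using Max_in[OF fin nemp] .
  then obtain x y where xy: "x \<in> V" "y \<in> V" "gdist E x y = diam V E" unfolding diam_def by auto
  then have "far E x y" using not_far_le2[of E x y] d by auto
  then show ?thesis using xy by blast
qed

context
  fixes VG :: "'a set" and EG and VH :: "'b set" and EH
  assumes gG: "graph VG EG" and gH: "graph VH EH"
    and cG: "connected_graph VG EG" and cH: "connected_graph VH EH"
    and cardG: "card VG \<ge> 2" and cardH: "card VH \<ge> 2"
    and dm: "diam (VG \<times> VH) (modprod_E VG EG VH EH) = 3"
begin

lemma R: "\<forall>x\<in>VG \<times> VH. \<forall>y\<in>VG \<times> VH. reach (modprod_E VG EG VH EH) x y"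
  using prod_reach[OF gG gH cG cH] by blast

lemma D: "\<forall>x\<in>VG \<times> VH. \<forall>y\<in>VG \<times> VH. gdist (modprod_E VG EG VH EH) x y \<le> 3"
  using diam_bound[OF gG gH dm] by blast

lemma finP: "finite (VG \<times> VH)" using gG gH unfolding graph_def by auto

lemma forcedH:
  assumes ac: "a \<in> VG" "c \<in> VG" and bd: "b \<in> VH" "d \<in> VH"
    and tw: "\<forall>e. (e = a \<or> EG a e) \<longleftrightarrow> (e = c \<or> EG c e)"
    and dj: "\<forall>f. \<not> ((f = b \<or> EH b f) \<and> (f = d \<or> EH d f))"
    and cov: "(\<forall>f\<in>VH. f = b \<or> EH b f \<or> f = d \<or> EH d f) \<or> (\<forall>e\<in>VG. e = a \<or> EG a e)"
  shows "\<forall>S. strong_resolving_set (VG \<times> VH) (modprod_E VG EG VH EH) S \<longrightarrow> (a,b) \<in> S \<or> (c,d) \<in> S"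
proof (intro allI impI)
  fix S assume S: "strong_resolving_set (VG \<times> VH) (modprod_E VG EG VH EH) S"
  have f1: "far (modprod_E VG EG VH EH) (a,b) (c,d)" by (rule farH[OF gG gH ac bd tw dj cov])
  have tw': "\<forall>e. (e = c \<or> EG c e) \<longleftrightarrow> (e = a \<or> EG a e)" using tw by blast
  have dj': "\<forall>f. \<not> ((f = d \<or> EH d f) \<and> (f = b \<or> EH b f))" using dj by blast
  have cov': "(\<forall>f\<in>VH. f = d \<or> EH d f \<or> f = b \<or> EH b f) \<or> (\<forall>e\<in>VG. e = c \<or> EG c e)" using cov tw by blast
  have f2: "far (modprod_E VG EG VH EH) (c,d) (a,b)" by (rule farH[OF gG gH ac(2,1) bd(2,1) tw' dj' cov'])
  show "(a,b) \<in> S \<or> (c,d) \<in> S" by (rule forced3[OF R D _ _ f1 f2 S]) (use ac bd in auto)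
qed

lemma forcedG:
  assumes ac: "a \<in> VG" "c \<in> VG" and bd: "b \<in> VH" "d \<in> VH"
    and tw: "\<forall>f. (f = b \<or> EH b f) \<longleftrightarrow> (f = d \<or> EH d f)"
    and dj: "\<forall>e. \<not> ((e = a \<or> EG a e) \<and> (e = c \<or> EG c e))"
    and cov: "\<forall>e\<in>VG. e = a \<or> EG a e \<or> e = c \<or> EG c e"
  shows "\<forall>S. strong_resolving_set (VG \<times> VH) (modprod_E VG EG VH EH) S \<longrightarrow> (a,b) \<in> S \<or> (c,d) \<in> S"
proof (intro allI impI)
  fix S assume S: "strong_resolving_set (VG \<times> VH) (modprod_E VG EG VH EH) S"
  have f1: "far (modprod_E VG EG VH EH) (a,b) (c,d)" by (rule farG[OF gG gH ac bd tw dj cov])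
  have tw': "\<forall>f. (f = d \<or> EH d f) \<longleftrightarrow> (f = b \<or> EH b f)" using tw by blast
  have dj': "\<forall>e. \<not> ((e = c \<or> EG c e) \<and> (e = a \<or> EG a e))" using dj by blast
  have cov': "\<forall>e\<in>VG. e = c \<or> EG c e \<or> e = a \<or> EG a e" using cov by blast
  have f2: "far (modprod_E VG EG VH EH) (c,d) (a,b)" by (rule farG[OF gG gH ac(2,1) bd(2,1) tw' dj' cov'])
  show "(a,b) \<in> S \<or> (c,d) \<in> S" by (rule forced3[OF R D _ _ f1 f2 S]) (use ac bd in auto)
qed

lemma case_a:
  assumes gpG: "gamma_pair VG EG g g'" and gpH: "gamma_pair VH EH h h'"
  shows "O_SR (VG \<times> VH) (modprod_E VG EG VH EH) = Outcome_B"
proof -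
  have G: "g \<in> VG" "g' \<in> VG" "\<forall>e. \<not> ((e = g \<or> EG g e) \<and> (e = g' \<or> EG g' e))"
       "\<forall>e\<in>VG. e = g \<or> EG g e \<or> e = g' \<or> EG g' e" using gp_props[OF gG gpG] by auto
  have H: "h \<in> VH" "h' \<in> VH" "\<forall>f. \<not> ((f = h \<or> EH h f) \<and> (f = h' \<or> EH h' f))"
       "\<forall>f\<in>VH. f = h \<or> EH h f \<or> f = h' \<or> EH h' f" using gp_props[OF gH gpH] by auto
  have ne: "g \<noteq> g'" "h \<noteq> h'" using G(3) H(3) by auto
  show ?thesis
  proof (rule quad_win[OF finP, of "(g,h)" "(g,h')" "(g',h')" "(g',h)"])
    show "\<forall>S. strong_resolving_set (VG \<times> VH) (modprod_E VG EG VH EH) S \<longrightarrow> (g, h) \<in> S \<or> (g, h') \<in> S"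
      by (rule forcedH) (use G H in auto)
    show "\<forall>S. strong_resolving_set (VG \<times> VH) (modprod_E VG EG VH EH) S \<longrightarrow> (g, h) \<in> S \<or> (g', h) \<in> S"
      by (rule forcedG) (use G H in auto)
    show "\<forall>S. strong_resolving_set (VG \<times> VH) (modprod_E VG EG VH EH) S \<longrightarrow> (g', h') \<in> S \<or> (g, h') \<in> S"
      by (rule forcedG) (use G H in blast)+
    show "\<forall>S. strong_resolving_set (VG \<times> VH) (modprod_E VG EG VH EH) S \<longrightarrow> (g', h') \<in> S \<or> (g', h) \<in> S"
      by (rule forcedH) (use G H in blast)+
  qed (use G H ne in auto)
qed


lemma case_b:
  assumes uu: "u \<noteq> u'" "universal_vertex VG EG u" "universal_vertex VG EG u'"
    and dH: "diam VH EH \<ge> 3"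
  shows "O_SR (VG \<times> VH) (modprod_E VG EG VH EH) = Outcome_B"
proof -
  have neH: "VH \<noteq> {}" using cardH by auto
  obtain x y where xy: "x \<in> VH" "y \<in> VH" "far EH x y" using diam_far[OF gH neH dH] by blast
  have dj: "\<forall>f. \<not> ((f = x \<or> EH x f) \<and> (f = y \<or> EH y f))"
    using xy(3) EHs[OF gG gH] unfolding far_def by metis
  have dj': "\<forall>f. \<not> ((f = y \<or> EH y f) \<and> (f = x \<or> EH x f))" using dj by blast
  have xy2: "x \<noteq> y" using xy(3) unfolding far_def by auto
  have U: "u \<in> VG" "u' \<in> VG" "\<forall>e\<in>VG. e = u \<or> EG u e" "\<forall>e\<in>VG. e = u' \<or> EG u' e"
    using uu(2,3) unfolding universal_vertex_def by auto
  have tw: "\<forall>e. (e = u \<or> EG u e) \<longleftrightarrow> (e = u' \<or> EG u' e)"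
    using U EGV[OF gG gH] by blast
  have tw': "\<forall>e. (e = u' \<or> EG u' e) \<longleftrightarrow> (e = u \<or> EG u e)" using tw by blast
  show ?thesis
  proof (rule quad_win[OF finP, of "(u,x)" "(u,y)" "(u',x)" "(u',y)"])
    show "\<forall>S. strong_resolving_set (VG \<times> VH) (modprod_E VG EG VH EH) S \<longrightarrow> (u, x) \<in> S \<or> (u, y) \<in> S"
      by (rule forcedH) (use U xy dj in auto)
    show "\<forall>S. strong_resolving_set (VG \<times> VH) (modprod_E VG EG VH EH) S \<longrightarrow> (u, x) \<in> S \<or> (u', y) \<in> S"
      by (rule forcedH[OF U(1,2) xy(1,2) tw dj]) (use U in blast)
    show "\<forall>S. strong_resolving_set (VG \<times> VH) (modprod_E VG EG VH EH) S \<longrightarrow> (u', x) \<in> S \<or> (u, y) \<in> S"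
      by (rule forcedH[OF U(2,1) xy(1,2) tw' dj]) (use U in blast)
    show "\<forall>S. strong_resolving_set (VG \<times> VH) (modprod_E VG EG VH EH) S \<longrightarrow> (u', x) \<in> S \<or> (u', y) \<in> S"
      by (rule forcedH) (use U xy dj in auto)
  qed (use U xy xy2 uu(1) in auto)
qed

lemma case_c:
  assumes tw0: "adjacent_twins VG EG g1 g2" and gpH: "gamma_pair VH EH h h'"
  shows "O_SR (VG \<times> VH) (modprod_E VG EG VH EH) = Outcome_B"
proof -
  have g: "g1 \<in> VG" "g2 \<in> VG" "g1 \<noteq> g2" "cnbhd EG g1 = cnbhd EG g2"
    using tw0 unfolding adjacent_twins_def by auto
  have tw: "\<forall>e. (e = g1 \<or> EG g1 e) \<longleftrightarrow> (e = g2 \<or> EG g2 e)"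
    using g(4) unfolding cnbhd_def set_eq_iff by auto
  have tw': "\<forall>e. (e = g2 \<or> EG g2 e) \<longleftrightarrow> (e = g1 \<or> EG g1 e)" using tw by blast
  have H: "h \<in> VH" "h' \<in> VH" "\<forall>f. \<not> ((f = h \<or> EH h f) \<and> (f = h' \<or> EH h' f))"
       "\<forall>f\<in>VH. f = h \<or> EH h f \<or> f = h' \<or> EH h' f" using gp_props[OF gH gpH] by auto
  have ne: "h \<noteq> h'" using H(3) by auto
  show ?thesis
  proof (rule quad_win[OF finP, of "(g1,h)" "(g1,h')" "(g2,h)" "(g2,h')"])
    show "\<forall>S. strong_resolving_set (VG \<times> VH) (modprod_E VG EG VH EH) S \<longrightarrow> (g1, h) \<in> S \<or> (g1, h') \<in> S"
      by (rule forcedH) (use g H in auto)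
    show "\<forall>S. strong_resolving_set (VG \<times> VH) (modprod_E VG EG VH EH) S \<longrightarrow> (g1, h) \<in> S \<or> (g2, h') \<in> S"
      by (rule forcedH[OF g(1,2) H(1,2) tw H(3)]) (use H in blast)
    show "\<forall>S. strong_resolving_set (VG \<times> VH) (modprod_E VG EG VH EH) S \<longrightarrow> (g2, h) \<in> S \<or> (g1, h') \<in> S"
      by (rule forcedH[OF g(2,1) H(1,2) tw' H(3)]) (use H in blast)
    show "\<forall>S. strong_resolving_set (VG \<times> VH) (modprod_E VG EG VH EH) S \<longrightarrow> (g2, h) \<in> S \<or> (g2, h') \<in> S"
      by (rule forcedH) (use g H in auto)
  qed (use g H ne in auto)
qed

lemma case_e:
  assumes gp1: "gamma_pair VH EH h1 h" and gp2: "gamma_pair VH EH h2 h"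
    and hh: "h1 \<noteq> h2" "h \<noteq> h1" "h \<noteq> h2"
  shows "O_SR (VG \<times> VH) (modprod_E VG EG VH EH) = Outcome_B"
proof -
  have finG: "finite VG" using gG unfolding graph_def by auto
  obtain a a' where aa: "a \<in> VG" "a' \<in> VG" "a \<noteq> a'" using two_elems[OF finG cardG] by blast
  have H1: "h1 \<in> VH" "h \<in> VH" "\<forall>f. \<not> ((f = h \<or> EH h f) \<and> (f = h1 \<or> EH h1 f))"
       "\<forall>f\<in>VH. f = h \<or> EH h f \<or> f = h1 \<or> EH h1 f" using gp_props[OF gH gp1] by auto
  have H2: "h2 \<in> VH" "\<forall>f. \<not> ((f = h \<or> EH h f) \<and> (f = h2 \<or> EH h2 f))"
       "\<forall>f\<in>VH. f = h \<or> EH h f \<or> f = h2 \<or> EH h2 f" using gp_props[OF gH gp2] by auto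
  have fq: "\<forall>S. strong_resolving_set (VG \<times> VH) (modprod_E VG EG VH EH) S \<longrightarrow> (b, h) \<in> S \<or> (b, h1) \<in> S"
    if "b \<in> VG" for b by (rule forcedH) (use that H1 in auto)
  have fr: "\<forall>S. strong_resolving_set (VG \<times> VH) (modprod_E VG EG VH EH) S \<longrightarrow> (b, h) \<in> S \<or> (b, h2) \<in> S"
    if "b \<in> VG" for b by (rule forcedH) (use that H1 H2 in auto)
  show ?thesis
    by (rule star2_win[OF finP _ _ _ _ _ _ _ _ _ _ _ _ _ fq[OF aa(1)] fr[OF aa(1)] fq[OF aa(2)] fr[OF aa(2)]])
       (use aa H1 H2 hh in auto)
qed

lemma nfar:
  assumes noUG: "\<forall>a\<in>VG. \<exists>e\<in>VG. \<not> (e = a \<or> EG a e)"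
    and noUH: "\<forall>b\<in>VH. \<exists>f\<in>VH. \<not> (f = b \<or> EH b f)"
    and noGP: "\<forall>a\<in>VG. \<forall>c\<in>VG. \<not> ((\<forall>e. \<not> ((e = a \<or> EG a e) \<and> (e = c \<or> EG c e))) \<and>
                     (\<forall>e\<in>VG. e = a \<or> EG a e \<or> e = c \<or> EG c e))"
    and x: "x \<in> VH" "\<forall>z. \<not> gamma_pair VH EH x z" and g: "g \<in> VG"
  shows "\<forall>z\<in>VG \<times> VH. \<not> far (modprod_E VG EG VH EH) (g, x) z"
proof (intro ballI notI)
  fix z assume z: "z \<in> VG \<times> VH" and f: "far (modprod_E VG EG VH EH) (g, x) z"
  obtain c d where cd: "z = (c,d)" "c \<in> VG" "d \<in> VH" using z by auto
  have "(\<forall>f. \<not> ((f = x \<or> EH x f) \<and> (f = d \<or> EH d f))) \<and> (\<forall>f\<in>VH. f = x \<or> EH x f \<or> f = d \<or> EH d f)"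
    by (rule char_far[OF gG gH noUG noUH noGP g cd(2) x(1) cd(3)]) (use f cd in simp)
  moreover have "VH \<noteq> {}" using cardH by auto
  ultimately have "gamma_pair VH EH x d"
    using like_gp[OF gH _ noUH x(1) cd(3)] by blast
  then show False using x(2) by blast
qed

lemma case_d:
  assumes noGP0: "\<nexists>g g'. gamma_pair VG EG g g'" and noU0: "\<nexists>u. universal_vertex VG EG u"
    and gpH: "gamma_pair VH EH h h'"
    and xy: "x \<in> VH" "y \<in> VH" "x \<noteq> y"
    and nx: "\<forall>z. \<not> gamma_pair VH EH x z" and ny: "\<forall>z. \<not> gamma_pair VH EH y z"
    and ncG: "\<not> complete_graph VG EG"
  shows "O_SR (VG \<times> VH) (modprod_E VG EG VH EH) = Outcome_B"
proof -
  have noUG: "\<forall>a\<in>VG. \<exists>e\<in>VG. \<not> (e = a \<or> EG a e)" using noU[OF noU0] .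
  have noUH: "\<forall>b\<in>VH. \<exists>f\<in>VH. \<not> (f = b \<or> EH b f)" using gp_no_univ[OF gH gpH] .
  have noGP: "\<forall>a\<in>VG. \<forall>c\<in>VG. \<not> ((\<forall>e. \<not> ((e = a \<or> EG a e) \<and> (e = c \<or> EG c e))) \<and>
                     (\<forall>e\<in>VG. e = a \<or> EG a e \<or> e = c \<or> EG c e))"
  proof (intro ballI notI)
    fix a c assume ac: "a \<in> VG" "c \<in> VG" and h: "(\<forall>e. \<not> ((e = a \<or> EG a e) \<and> (e = c \<or> EG c e))) \<and>
                     (\<forall>e\<in>VG. e = a \<or> EG a e \<or> e = c \<or> EG c e)"
    have "VG \<noteq> {}" using cardG by auto
    then have "gamma_pair VG EG a c" using like_gp[OF gG _ noUG ac] h by blast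
    then show False using noGP0 by blast
  qed
  have NF: "\<forall>z\<in>VG \<times> VH. \<not> far (modprod_E VG EG VH EH) (g, w) z" if "g \<in> VG" "w \<in> {x,y}" for g w
  proof (cases "w = x")
    case True then show ?thesis using nfar[OF noUG noUH noGP xy(1) nx that(1)] by simp
  next
    case False then have "w = y" using that(2) by simp
    then show ?thesis using nfar[OF noUG noUH noGP xy(2) ny that(1)] by simp
  qed
  have FD: "\<forall>S. strong_resolving_set (VG \<times> VH) (modprod_E VG EG VH EH) S \<longrightarrow> (g1, w1) \<in> S \<or> (g2, w2) \<in> S"
    if "g1 \<in> VG" "g2 \<in> VG" "w1 \<in> {x,y}" "w2 \<in> {x,y}" "(g1,w1) \<noteq> (g2,w2)"
       "\<not> modprod_E VG EG VH EH (g1,w1) (g2,w2)" for g1 g2 w1 w2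
  proof (intro allI impI)
    fix S assume S: "strong_resolving_set (VG \<times> VH) (modprod_E VG EG VH EH) S"
    have n2: "\<not> modprod_E VG EG VH EH (g2,w2) (g1,w1)" using that(6) mp_sym[OF gG gH] by blast
    show "(g1, w1) \<in> S \<or> (g2, w2) \<in> S"
      by (rule forced2[OF R _ _ that(5,6) n2 _ S]) (use that xy NF in auto)
  qed
  show ?thesis
  proof (cases "EH x y")
    case True
    obtain g g' where gg: "g \<in> VG" "g' \<in> VG" "g \<noteq> g'" "\<not> EG g g'"
      using ncG unfolding complete_graph_def by blast
    have ngg: "\<not> EG g' g" using gg(4) EGs[OF gG gH] by blast
    show ?thesis
    proof (rule quad_win[OF finP, of "(g,x)" "(g',x)" "(g,y)" "(g',y)"])
      show "\<forall>S. strong_resolving_set (VG \<times> VH) (modprod_E VG EG VH EH) S \<longrightarrow> (g, x) \<in> S \<or> (g', x) \<in> S"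
        by (rule FD) (use gg xy True ngg in \<open>auto simp: modprod_E_def compl_edge_def\<close>)
      show "\<forall>S. strong_resolving_set (VG \<times> VH) (modprod_E VG EG VH EH) S \<longrightarrow> (g, x) \<in> S \<or> (g', y) \<in> S"
        by (rule FD) (use gg xy True ngg in \<open>auto simp: modprod_E_def compl_edge_def\<close>)
      show "\<forall>S. strong_resolving_set (VG \<times> VH) (modprod_E VG EG VH EH) S \<longrightarrow> (g, y) \<in> S \<or> (g', x) \<in> S"
        by (rule FD) (use gg xy True ngg EHs[OF gG gH, of x y] in \<open>auto simp: modprod_E_def compl_edge_def\<close>)
      show "\<forall>S. strong_resolving_set (VG \<times> VH) (modprod_E VG EG VH EH) S \<longrightarrow> (g, y) \<in> S \<or> (g', y) \<in> S"
        by (rule FD) (use gg xy True ngg in \<open>auto simp: modprod_E_def compl_edge_def\<close>)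
    qed (use gg xy in auto)
  next
    case False
    obtain g g' where gg0: "EG g g'" using has_edge[OF gG cG cardG] by blast
    have gg: "g \<in> VG" "g' \<in> VG" "g \<noteq> g'" using gg0 EGV[OF gG gH] EGi[OF gG gH] by metis+
    have nyx: "\<not> EH y x" using False EHs[OF gG gH] by blast
    show ?thesis
    proof (rule quad_win[OF finP, of "(g,x)" "(g,y)" "(g',x)" "(g',y)"])
      show "\<forall>S. strong_resolving_set (VG \<times> VH) (modprod_E VG EG VH EH) S \<longrightarrow> (g, x) \<in> S \<or> (g, y) \<in> S"
        by (rule FD) (use gg gg0 xy False nyx in \<open>auto simp: modprod_E_def compl_edge_def\<close>)
      show "\<forall>S. strong_resolving_set (VG \<times> VH) (modprod_E VG EG VH EH) S \<longrightarrow> (g, x) \<in> S \<or> (g', y) \<in> S"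
        by (rule FD) (use gg gg0 xy False nyx in \<open>auto simp: modprod_E_def compl_edge_def\<close>)
      show "\<forall>S. strong_resolving_set (VG \<times> VH) (modprod_E VG EG VH EH) S \<longrightarrow> (g', x) \<in> S \<or> (g, y) \<in> S"
        by (rule FD) (use gg gg0 xy False nyx EGs[OF gG gH, of g g'] in \<open>auto simp: modprod_E_def compl_edge_def\<close>)
      show "\<forall>S. strong_resolving_set (VG \<times> VH) (modprod_E VG EG VH EH) S \<longrightarrow> (g', x) \<in> S \<or> (g', y) \<in> S"
        by (rule FD) (use gg gg0 xy False nyx in \<open>auto simp: modprod_E_def compl_edge_def\<close>)
    qed (use gg xy in auto)
  qed
qed

end

theorem mainTheorem18:
  fixes VG :: "'a set" and EG :: "'a \<Rightarrow> 'a \<Rightarrow> bool"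
    and VH :: "'b set" and EH :: "'b \<Rightarrow> 'b \<Rightarrow> bool"
  assumes "graph VG EG" and "graph VH EH"
    and "connected_graph VG EG" and "connected_graph VH EH"
    and "card VG \<ge> 2" and "card VH \<ge> 2"
    and "\<not> complete_graph VG EG" and "\<not> complete_graph VH EH"
    and "diam (VG \<times> VH) (modprod_E VG EG VH EH) = 3"
  shows
   "((\<exists>g g' h h'. gamma_pair VG EG g g' \<and> gamma_pair VH EH h h')
       \<longrightarrow> O_SR (VG \<times> VH) (modprod_E VG EG VH EH) = Outcome_B)
  \<and> ((\<exists>u u'. u \<noteq> u' \<and> universal_vertex VG EG u \<and> universal_vertex VG EG u')
       \<and> diam VH EH \<ge> 3
       \<longrightarrow> O_SR (VG \<times> VH) (modprod_E VG EG VH EH) = Outcome_B)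
  \<and> ((\<nexists>g g'. gamma_pair VG EG g g') \<and> (\<nexists>u. universal_vertex VG EG u)
       \<and> (\<exists>g1 g2. adjacent_twins VG EG g1 g2) \<and> (\<exists>h h'. gamma_pair VH EH h h')
       \<longrightarrow> O_SR (VG \<times> VH) (modprod_E VG EG VH EH) = Outcome_B)
  \<and> ((\<nexists>g g'. gamma_pair VG EG g g') \<and> (\<nexists>u. universal_vertex VG EG u)
       \<and> (\<exists>h h'. gamma_pair VH EH h h')
       \<and> (\<exists>x\<in>VH. \<exists>y\<in>VH. x \<noteq> y
            \<and> (\<forall>z. \<not> gamma_pair VH EH x z \<and> \<not> gamma_pair VH EH z x)
            \<and> (\<forall>z. \<not> gamma_pair VH EH y z \<and> \<not> gamma_pair VH EH z y))
       \<longrightarrow> O_SR (VG \<times> VH) (modprod_E VG EG VH EH) = Outcome_B)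
  \<and> ((\<nexists>g g'. gamma_pair VG EG g g') \<and> (\<nexists>u. universal_vertex VG EG u)
       \<and> (\<exists>h1 h2 h. adjacent_twins VH EH h1 h2 \<and> h \<in> VH - {h1, h2}
            \<and> gamma_pair VH EH h1 h \<and> gamma_pair VH EH h2 h)
       \<longrightarrow> O_SR (VG \<times> VH) (modprod_E VG EG VH EH) = Outcome_B)"
proof -
  note A = assms(1-6) assms(9)
  show ?thesis
  proof (intro conjI impI)
    assume "\<exists>g g' h h'. gamma_pair VG EG g g' \<and> gamma_pair VH EH h h'"
    then obtain g g' h h' where "gamma_pair VG EG g g'" "gamma_pair VH EH h h'" by blast
    then show "O_SR (VG \<times> VH) (modprod_E VG EG VH EH) = Outcome_B" by (rule case_a[OF A])
  next
    assume h: "(\<exists>u u'. u \<noteq> u' \<and> universal_vertex VG EG u \<and> universal_vertex VG EG u') \<and> diam VH EH \<ge> 3"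
    then obtain u u' where "u \<noteq> u'" "universal_vertex VG EG u" "universal_vertex VG EG u'" by blast
    then show "O_SR (VG \<times> VH) (modprod_E VG EG VH EH) = Outcome_B" using case_b[OF A] h by blast
  next
    assume h: "(\<nexists>g g'. gamma_pair VG EG g g') \<and> (\<nexists>u. universal_vertex VG EG u)
       \<and> (\<exists>g1 g2. adjacent_twins VG EG g1 g2) \<and> (\<exists>h h'. gamma_pair VH EH h h')"
    then obtain g1 g2 h h' where "adjacent_twins VG EG g1 g2" "gamma_pair VH EH h h'" by blast
    then show "O_SR (VG \<times> VH) (modprod_E VG EG VH EH) = Outcome_B" by (rule case_c[OF A])
  next
    assume h: "(\<nexists>g g'. gamma_pair VG EG g g') \<and> (\<nexists>u. universal_vertex VG EG u)
       \<and> (\<exists>h h'. gamma_pair VH EH h h')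
       \<and> (\<exists>x\<in>VH. \<exists>y\<in>VH. x \<noteq> y
            \<and> (\<forall>z. \<not> gamma_pair VH EH x z \<and> \<not> gamma_pair VH EH z x)
            \<and> (\<forall>z. \<not> gamma_pair VH EH y z \<and> \<not> gamma_pair VH EH z y))"
    then obtain h h' x y where hh: "gamma_pair VH EH h h'" and xy: "x \<in> VH" "y \<in> VH" "x \<noteq> y"
      and nx: "\<forall>z. \<not> gamma_pair VH EH x z" and ny: "\<forall>z. \<not> gamma_pair VH EH y z" by blast
    have n1: "\<nexists>g g'. gamma_pair VG EG g g'" and n2: "\<nexists>u. universal_vertex VG EG u" using h by blast+
    show "O_SR (VG \<times> VH) (modprod_E VG EG VH EH) = Outcome_B"
      by (rule case_d[OF A n1 n2 hh xy nx ny assms(7)])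
  next
    assume h: "(\<nexists>g g'. gamma_pair VG EG g g') \<and> (\<nexists>u. universal_vertex VG EG u)
       \<and> (\<exists>h1 h2 h. adjacent_twins VH EH h1 h2 \<and> h \<in> VH - {h1, h2}
            \<and> gamma_pair VH EH h1 h \<and> gamma_pair VH EH h2 h)"
    then obtain h1 h2 h where t: "adjacent_twins VH EH h1 h2" "h \<in> VH - {h1, h2}"
      and g: "gamma_pair VH EH h1 h" "gamma_pair VH EH h2 h" by blast
    have "h1 \<noteq> h2" "h \<noteq> h1" "h \<noteq> h2" using t unfolding adjacent_twins_def by auto
    then show "O_SR (VG \<times> VH) (modprod_E VG EG VH EH) = Outcome_B"
      by (rule case_e[OF A g])
  qed
qed

end
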